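(* Let $\mathcal A,\mathcal B$ be unital $C^*$-algebras with faithful traces $\tau,\omega$, respectively, let $J:\mathcal A\to\mathcal B$ be a Jordan *-isomorphism and $C\in\mathcal B_+^{-1}$ such that $\omega(CJ(X))=\tau(X)$ for all $X\in\mathcal A$. Then $C$ is a central element of $\mathcal B$.
   Context: $\mathcal B_+^{-1}$ is the set of positive invertible elements. A trace is a positive linear functional with $\tau(AB)=\tau(BA)$; faithful means $\tau(A)=0$, $A\ge0$ implies $A=0$. A Jordan *-isomorphism is a linear bijection $J$ with $J(XY+YX)=J(X)J(Y)+J(Y)J(X)$ and $J(X^* )=J(X)^*$. *)

theory Defs
  imports Complex_Main
begin

text \<open>Abstract unital C*-algebras, as a type class. Complex scalar multiplication
  is an explicit operation compatible with the real scaling of the underlying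
  real Banach algebra with unit (norm 1 = 1).\<close>

class complex_scale =
  fixes scaleC :: "complex \<Rightarrow> 'a \<Rightarrow> 'a" (infixr "*\<^sub>C" 75)

class cstar_algebra = real_normed_algebra_1 + banach + complex_scale +
  fixes adj :: "'a \<Rightarrow> 'a"
  assumes scaleC_add_right: "a *\<^sub>C (x + y) = a *\<^sub>C x + a *\<^sub>C y"
    and scaleC_add_left: "(a + b) *\<^sub>C x = a *\<^sub>C x + b *\<^sub>C x"
    and scaleC_scaleC: "a *\<^sub>C (b *\<^sub>C x) = (a * b) *\<^sub>C x"
    and scaleC_one: "1 *\<^sub>C x = x"
    and scaleR_scaleC: "scaleR r x = complex_of_real r *\<^sub>C x"
    and mult_scaleC_left: "(a *\<^sub>C x) * y = a *\<^sub>C (x * y)"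
    and mult_scaleC_right: "x * (a *\<^sub>C y) = a *\<^sub>C (x * y)"
    and norm_scaleC: "norm (a *\<^sub>C x) = cmod a * norm x"
    and adj_adj: "adj (adj x) = x"
    and adj_add: "adj (x + y) = adj x + adj y"
    and adj_scaleC: "adj (a *\<^sub>C x) = cnj a *\<^sub>C adj x"
    and adj_mult: "adj (x * y) = adj y * adj x"
    and cstar_identity: "norm (adj x * x) = (norm x)\<^sup>2"

definition invertible_el :: "'a::cstar_algebra \<Rightarrow> bool" where
  "invertible_el x \<longleftrightarrow> (\<exists>y. x * y = 1 \<and> y * x = 1)"

definition cspectrum :: "'a::cstar_algebra \<Rightarrow> complex set" where
  "cspectrum x = {z. \<not> invertible_el (x - z *\<^sub>C 1)}"

definition selfadjoint :: "'a::cstar_algebra \<Rightarrow> bool" where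
  "selfadjoint x \<longleftrightarrow> adj x = x"

definition positive_el :: "'a::cstar_algebra \<Rightarrow> bool" where
  "positive_el x \<longleftrightarrow> selfadjoint x \<and> cspectrum x \<subseteq> {z. Im z = 0 \<and> 0 \<le> Re z}"

definition positive_invertible :: "'a::cstar_algebra \<Rightarrow> bool" where
  "positive_invertible x \<longleftrightarrow> positive_el x \<and> invertible_el x"

definition clinear_functional :: "('a::cstar_algebra \<Rightarrow> complex) \<Rightarrow> bool" where
  "clinear_functional f \<longleftrightarrow> (\<forall>x y. f (x + y) = f x + f y) \<and> (\<forall>a x. f (a *\<^sub>C x) = a * f x)"

definition clinear_map :: "('a::cstar_algebra \<Rightarrow> 'b::cstar_algebra) \<Rightarrow> bool" where
  "clinear_map f \<longleftrightarrow> (\<forall>x y. f (x + y) = f x + f y) \<and> (\<forall>a x. f (a *\<^sub>C x) = a *\<^sub>C f x)"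

definition is_trace :: "('a::cstar_algebra \<Rightarrow> complex) \<Rightarrow> bool" where
  "is_trace \<tau> \<longleftrightarrow> clinear_functional \<tau>
     \<and> (\<forall>x. positive_el x \<longrightarrow> Im (\<tau> x) = 0 \<and> 0 \<le> Re (\<tau> x))
     \<and> (\<forall>x y. \<tau> (x * y) = \<tau> (y * x))"

definition faithful :: "('a::cstar_algebra \<Rightarrow> complex) \<Rightarrow> bool" where
  "faithful \<tau> \<longleftrightarrow> (\<forall>x. positive_el x \<and> \<tau> x = 0 \<longrightarrow> x = 0)"

definition jordan_star_iso :: "('a::cstar_algebra \<Rightarrow> 'b::cstar_algebra) \<Rightarrow> bool" where
  "jordan_star_iso J \<longleftrightarrow> clinear_map J \<and> bij J
     \<and> (\<forall>X Y. J (X * Y + Y * X) = J X * J Y + J Y * J X)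
     \<and> (\<forall>X. J (adj X) = adj (J X))"

definition central :: "'a::cstar_algebra \<Rightarrow> bool" where
  "central c \<longleftrightarrow> (\<forall>y. c * y = y * c)"

end

theory Submission
  imports Defs
begin

lemma neumann:
  fixes x :: "'a::{real_normed_algebra_1, banach}"
  assumes "norm x < 1"
  shows "\<exists>y. (1 - x) * y = 1 \<and> y * (1 - x) = 1"
proof -
  have "summable (\<lambda>n. norm x ^ n)" using assms by (intro summable_geometric) simp
  hence "summable (\<lambda>n. norm (x ^ n))"
    by (rule summable_comparison_test[rotated]) (auto intro: norm_power_ineq)
  hence sm: "summable (\<lambda>n. x ^ n)" by (rule summable_norm_cancel)
  define s where "s = suminf (\<lambda>n. x ^ n)"
  have L: "(\<lambda>n. \<Sum>i<n. x ^ i) \<longlonglongrightarrow> s" unfolding s_def by (rule summable_LIMSEQ[OF sm])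
  have P: "(\<lambda>n. x ^ n) \<longlonglongrightarrow> 0" using assms by (rule LIMSEQ_power_zero)
  have e1: "(1 - x) * (\<Sum>i<n. x ^ i) = 1 - x ^ n" for n
  proof (induction n)
    case (Suc n)
    have "(1 - x) * (\<Sum>i<Suc n. x ^ i) = (1 - x) * (\<Sum>i<n. x ^ i) + (1 - x) * x ^ n"
      by (simp add: distrib_left)
    also have "\<dots> = 1 - x ^ Suc n" unfolding Suc by (simp add: algebra_simps)
    finally show ?case .
  qed simp
  have e2: "(\<Sum>i<n. x ^ i) * (1 - x) = 1 - x ^ n" for n
  proof (induction n)
    case (Suc n)
    have "(\<Sum>i<Suc n. x ^ i) * (1 - x) = (\<Sum>i<n. x ^ i) * (1 - x) + x ^ n * (1 - x)"
      by (simp add: distrib_right)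
    also have "\<dots> = 1 - x ^ Suc n" unfolding Suc by (simp add: algebra_simps power_commutes)
    finally show ?case .
  qed simp
  have "(\<lambda>n. (1 - x) * (\<Sum>i<n. x ^ i)) \<longlonglongrightarrow> (1 - x) * s" by (rule tendsto_mult_left[OF L])
  moreover have "(\<lambda>n. (1 - x) * (\<Sum>i<n. x ^ i)) \<longlonglongrightarrow> 1"
    unfolding e1 using tendsto_diff[OF tendsto_const P, of 1] by simp
  ultimately have a: "(1 - x) * s = 1" using LIMSEQ_unique by blast
  have "(\<lambda>n. (\<Sum>i<n. x ^ i) * (1 - x)) \<longlonglongrightarrow> s * (1 - x)" by (rule tendsto_mult_right[OF L])
  moreover have "(\<lambda>n. (\<Sum>i<n. x ^ i) * (1 - x)) \<longlonglongrightarrow> 1"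
    unfolding e2 using tendsto_diff[OF tendsto_const P, of 1] by simp
  ultimately have b: "s * (1 - x) = 1" using LIMSEQ_unique by blast
  from a b show ?thesis by blast
qed

lemma scaleC_zero_left [simp]: "(0::complex) *\<^sub>C (x::'a::cstar_algebra) = 0"
  using scaleC_add_left[of 0 0 x] by simp
lemma scaleC_zero_right [simp]: "a *\<^sub>C (0::'a::cstar_algebra) = 0"
  using scaleC_add_right[of a 0 0] by simp
lemma scaleC_minus_left: "(- a) *\<^sub>C (x::'a::cstar_algebra) = - (a *\<^sub>C x)"
  using scaleC_add_left[of a "-a" x] by (simp add: eq_neg_iff_add_eq_0 add.commute)
lemma scaleC_minus_right: "a *\<^sub>C (- x::'a::cstar_algebra) = - (a *\<^sub>C x)"
  using scaleC_add_right[of a x "-x"] by (simp add: eq_neg_iff_add_eq_0 add.commute)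
lemma scaleC_diff_right: "a *\<^sub>C (x - y::'a::cstar_algebra) = a *\<^sub>C x - a *\<^sub>C y"
  using scaleC_add_right[of a x "-y"] scaleC_minus_right[of a y] by simp
lemma scaleC_diff_left: "(a - b) *\<^sub>C (x::'a::cstar_algebra) = a *\<^sub>C x - b *\<^sub>C x"
  using scaleC_add_left[of a "-b" x] scaleC_minus_left[of b x] by simp

lemma adj_zero [simp]: "adj (0::'a::cstar_algebra) = 0"
  using adj_add[of "0::'a" 0] by simp
lemma adj_minus: "adj (- x::'a::cstar_algebra) = - adj x"
  using adj_add[of x "-x"] by (simp add: eq_neg_iff_add_eq_0 add.commute)
lemma adj_diff: "adj (x - y::'a::cstar_algebra) = adj x - adj y"
  using adj_add[of x "-y"] adj_minus[of y] by simp
lemma adj_one [simp]: "adj (1::'a::cstar_algebra) = 1"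
proof -
  have "adj (adj 1 * (1::'a)) = adj 1 * adj (adj 1)" by (rule adj_mult)
  thus ?thesis by (simp add: adj_adj)
qed

lemma norm_scaleC_one: "norm (z *\<^sub>C (1::'a::cstar_algebra)) = cmod z"
  by (simp add: norm_scaleC)

lemma inv_prod:
  fixes a b :: "'a::cstar_algebra"
  assumes "invertible_el a" "invertible_el b" shows "invertible_el (a * b)"
proof -
  obtain a' where a: "a * a' = 1" "a' * a = 1" using assms(1) unfolding invertible_el_def by blast
  obtain b' where b: "b * b' = 1" "b' * b = 1" using assms(2) unfolding invertible_el_def by blast
  have "(a * b) * (b' * a') = 1" by (simp add: mult.assoc flip: mult.assoc[of b b'] add: a b)
  moreover have "(b' * a') * (a * b) = 1" by (simp add: mult.assoc flip: mult.assoc[of a' a] add: a b)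
  ultimately show ?thesis unfolding invertible_el_def by blast
qed

lemma inv_scale:
  fixes a :: "'a::cstar_algebra"
  assumes "invertible_el a" "z \<noteq> 0" shows "invertible_el (z *\<^sub>C a)"
proof -
  obtain a' where a: "a * a' = 1" "a' * a = 1" using assms(1) unfolding invertible_el_def by blast
  have "(z *\<^sub>C a) * ((1/z) *\<^sub>C a') = 1"
    by (simp add: mult_scaleC_left mult_scaleC_right scaleC_scaleC a assms(2) scaleC_one)
  moreover have "((1/z) *\<^sub>C a') * (z *\<^sub>C a) = 1"
    by (simp add: mult_scaleC_left mult_scaleC_right scaleC_scaleC a assms(2) scaleC_one)
  ultimately show ?thesis unfolding invertible_el_def by blast
qed

lemma large_inv:
  fixes x :: "'a::cstar_algebra"
  assumes "norm x < cmod z" shows "invertible_el (x - z *\<^sub>C 1)"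
proof -
  have z: "z \<noteq> 0" using assms by auto
  define y where "y = (1/z) *\<^sub>C x"
  have "norm y < 1" using assms z by (simp add: y_def norm_scaleC norm_divide field_simps)
  then obtain y' where "(1 - y) * y' = 1 \<and> y' * (1 - y) = 1" using neumann by blast
  hence "invertible_el (1 - y)" unfolding invertible_el_def by blast
  hence "invertible_el ((- z) *\<^sub>C (1 - y))" using z by (intro inv_scale) auto
  moreover have "(- z) *\<^sub>C (1 - y) = x - z *\<^sub>C 1"
    using z by (simp add: y_def scaleC_diff_right scaleC_scaleC scaleC_minus_left scaleC_one)
  ultimately show ?thesis by simp
qed


lemma mult_scaleC_one_right [simp]: "(x::'a::cstar_algebra) * (a *\<^sub>C 1) = a *\<^sub>C x"
  by (simp add: mult_scaleC_right)
lemma mult_scaleC_one_left [simp]: "(a *\<^sub>C 1) * (x::'a::cstar_algebra) = a *\<^sub>C x"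
  by (simp add: mult_scaleC_left)

lemma prod_lin: "(g + a *\<^sub>C 1) * (g + b *\<^sub>C 1) = g * g + (a + b) *\<^sub>C (g::'a::cstar_algebra) + (a * b) *\<^sub>C 1"
  by (simp add: algebra_simps scaleC_add_left scaleC_add_right scaleC_scaleC mult_scaleC_left)

lemma ii_sq: "- (\<i> * c * (\<i> * c)) = c * (c::complex)"
proof -
  have "\<i> * c * (\<i> * c) = (\<i> * \<i>) * (c * c)" by (simp only: ac_simps)
  thus ?thesis by simp
qed

lemma sa_inv:
  fixes g :: "'a::cstar_algebra"
  assumes sa: "selfadjoint g" and w: "Im w \<noteq> 0"
  shows "invertible_el (g - w *\<^sub>C 1)"
proof (rule ccontr)
  assume ni: "\<not> invertible_el (g - w *\<^sub>C 1)"
  have key: "(Re w)\<^sup>2 + (Im w + t)\<^sup>2 \<le> (norm g)\<^sup>2 + t\<^sup>2" for t :: real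
  proof -
    define h where "h = g + (\<i> * t) *\<^sub>C 1"
    have "h - (w + \<i> * t) *\<^sub>C 1 = g - w *\<^sub>C 1"
      by (simp add: h_def scaleC_add_left)
    hence "\<not> invertible_el (h - (w + \<i> * t) *\<^sub>C 1)" using ni by simp
    hence c1: "cmod (w + \<i> * t) \<le> norm h" using large_inv[of h "w + \<i> * t"] by linarith
    have ah: "adj h = g + (- (\<i> * t)) *\<^sub>C 1"
      using sa by (simp add: h_def adj_add adj_scaleC selfadjoint_def)
    have "adj h * h = g * g + ((- (\<i> * t)) + \<i> * t) *\<^sub>C g + ((- (\<i> * t)) * (\<i> * t)) *\<^sub>C 1"
      using prod_lin[of g "- (\<i> * t)" "\<i> * t"] ah h_def by simp
    also have "\<dots> = g * g + (complex_of_real (t\<^sup>2)) *\<^sub>C 1"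
      by (simp add: power2_eq_square ii_sq)
    finally have "(norm h)\<^sup>2 = norm (g * g + (complex_of_real (t\<^sup>2)) *\<^sub>C 1)"
      using cstar_identity[of h] by simp
    also have "\<dots> \<le> norm (g * g) + norm ((complex_of_real (t\<^sup>2)) *\<^sub>C (1::'a))"
      by (rule norm_triangle_ineq)
    also have "\<dots> = (norm g)\<^sup>2 + t\<^sup>2"
      using cstar_identity[of g] sa by (simp add: selfadjoint_def norm_scaleC_one norm_power)
    finally have c2: "(norm h)\<^sup>2 \<le> (norm g)\<^sup>2 + t\<^sup>2" .
    have "(cmod (w + \<i> * t))\<^sup>2 \<le> (norm h)\<^sup>2" using c1 by (simp add: power_mono)
    moreover have "(cmod (w + \<i> * t))\<^sup>2 = (Re w)\<^sup>2 + (Im w + t)\<^sup>2"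
      by (simp add: cmod_power2)
    ultimately show ?thesis using c2 by linarith
  qed
  define t where "t = ((norm g)\<^sup>2 + 1) / (2 * Im w)"
  have "2 * Im w * t = (norm g)\<^sup>2 + 1" using w by (simp add: t_def)
  moreover have "(Re w)\<^sup>2 + (Im w + t)\<^sup>2 = (Re w)\<^sup>2 + (Im w)\<^sup>2 + 2 * Im w * t + t\<^sup>2"
    by (simp add: power2_eq_square algebra_simps)
  moreover have "0 \<le> (Re w)\<^sup>2 + (Im w)\<^sup>2" by simp
  ultimately show False using key[of t] by linarith
qed

lemma sq_pos:
  fixes g :: "'a::cstar_algebra"
  assumes sa: "selfadjoint g"
  shows "positive_el (g * g)"
  unfolding positive_el_def
proof
  show "selfadjoint (g * g)" using sa by (simp add: selfadjoint_def adj_mult)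
  show "cspectrum (g * g) \<subseteq> {z. Im z = 0 \<and> 0 \<le> Re z}"
  proof
    fix z assume zs: "z \<in> cspectrum (g * g)"
    show "z \<in> {z. Im z = 0 \<and> 0 \<le> Re z}"
    proof (rule ccontr)
      assume nz: "z \<notin> {z. Im z = 0 \<and> 0 \<le> Re z}"
      define w where "w = csqrt z"
      have wz: "w * w = z" using power2_csqrt[of z] by (simp add: w_def power2_eq_square)
      have iw: "Im w \<noteq> 0"
      proof
        assume "Im w = 0"
        hence "Im z = 0 \<and> 0 \<le> Re z" using wz[symmetric] by simp
        thus False using nz by simp
      qed
      have "invertible_el ((g - w *\<^sub>C 1) * (g - (- w) *\<^sub>C 1))"
        by (intro inv_prod sa_inv sa) (use iw in auto)
      moreover have "(g - w *\<^sub>C 1) * (g - (- w) *\<^sub>C 1) = g * g - z *\<^sub>C 1"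
        by (simp add: algebra_simps scaleC_minus_left scaleC_diff_right scaleC_scaleC mult_scaleC_left flip: wz)
      ultimately show False using zs by (simp add: cspectrum_def)
    qed
  qed
qed

lemma sa_sq_zero:
  fixes g :: "'a::cstar_algebra"
  assumes "selfadjoint g" "g * g = 0" shows "g = 0"
  using cstar_identity[of g] assms by (simp add: selfadjoint_def)

lemma faithful_sq:
  fixes g :: "'a::cstar_algebra"
  assumes "faithful \<omega>" "selfadjoint g" "\<omega> (g * g) = 0" shows "g = 0"
  using assms sq_pos[of g] sa_sq_zero[of g] unfolding faithful_def by blast


lemma lin_minus:
  assumes "clinear_functional f" shows "f (- x) = - f (x::'a::cstar_algebra)"
proof -
  have "f ((-1) *\<^sub>C x) = (-1) * f x" using assms unfolding clinear_functional_def by blast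
  thus ?thesis by (simp add: scaleC_minus_left scaleC_one)
qed

lemma lin_diff:
  assumes "clinear_functional f" shows "f (x - y) = f x - f (y::'a::cstar_algebra)"
  using assms lin_minus[OF assms, of y] unfolding clinear_functional_def
  by (metis diff_conv_add_uminus)

lemma linm_minus:
  assumes "clinear_map f" shows "f (- x) = - f (x::'a::cstar_algebra)"
proof -
  have "f ((-1) *\<^sub>C x) = (-1) *\<^sub>C f x" using assms unfolding clinear_map_def by blast
  thus ?thesis by (simp add: scaleC_minus_left scaleC_one)
qed

lemma linm_diff:
  assumes "clinear_map f" shows "f (x - y) = f x - f (y::'a::cstar_algebra)"
  using assms linm_minus[OF assms, of y] unfolding clinear_map_def
  by (metis diff_conv_add_uminus)

lemma double_cancel: "(x::'a::cstar_algebra) + x = y + y \<Longrightarrow> x = y"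
proof -
  assume "x + x = y + y"
  hence "scaleR 2 x = scaleR 2 y" by (simp add: scaleR_2)
  thus ?thesis by simp
qed

theorem lemma18:
  fixes \<tau> :: "'a::cstar_algebra \<Rightarrow> complex"
    and \<omega> :: "'b::cstar_algebra \<Rightarrow> complex"
    and J :: "'a \<Rightarrow> 'b"
    and C :: 'b
  assumes "is_trace \<tau>" and "faithful \<tau>"
    and "is_trace \<omega>" and "faithful \<omega>"
    and "jordan_star_iso J"
    and "positive_invertible C"
    and "\<forall>X. \<omega> (C * J X) = \<tau> X"
  shows "central C"
proof -
  have tl: "clinear_functional \<tau>" and tt: "\<And>x y. \<tau> (x * y) = \<tau> (y * x)"
    using assms(1) unfolding is_trace_def by auto
  have ol: "clinear_functional \<omega>" and ot: "\<And>x y. \<omega> (x * y) = \<omega> (y * x)"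
    using assms(3) unfolding is_trace_def by auto
  have tadd: "\<And>x y. \<tau> (x + y) = \<tau> x + \<tau> y" using tl unfolding clinear_functional_def by blast
  have oadd: "\<And>x y. \<omega> (x + y) = \<omega> x + \<omega> y" using ol unfolding clinear_functional_def by blast
  have osc: "\<And>a x. \<omega> (a *\<^sub>C x) = a * \<omega> x" using ol unfolding clinear_functional_def by blast
  have Jl: "clinear_map J" and Jb: "bij J" and Jj: "\<And>X Y. J (X * Y + Y * X) = J X * J Y + J Y * J X"
    using assms(5) unfolding jordan_star_iso_def by auto
  have Jadd: "\<And>x y. J (x + y) = J x + J y" using Jl unfolding clinear_map_def by blast
  have Csa: "adj C = C" using assms(6) unfolding positive_invertible_def positive_el_def selfadjoint_def by blast
  have cor: "\<And>X. \<omega> (C * J X) = \<tau> X" using assms(7) by blast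
  have Jsq: "J (X * X) = J X * J X" for X
    using Jj[of X X] Jadd[of "X * X" "X * X"] by (auto intro: double_cancel)
  have stepA: "\<omega> (b * C * b * d) + \<omega> (b * C * b * d) = \<omega> (C * b * b * d) + \<omega> (b * b * C * d)" for b d
  proof -
    obtain X where X: "J X = b" using Jb by (metis bij_pointE)
    obtain Y where Y: "J Y = d" using Jb by (metis bij_pointE)
    have id: "X * (X * Y + Y * X) + (X * Y + Y * X) * X = (X * X * Y + Y * (X * X)) + (X * Y * X + X * Y * X)"
      by (simp add: algebra_simps)
    have "J (X * (X * Y + Y * X) + (X * Y + Y * X) * X) = b * (b * d + d * b) + (b * d + d * b) * b"
      using Jj[of X "X * Y + Y * X"] Jj[of X Y] X Y by simp
    moreover have "J (X * X * Y + Y * (X * X)) = b * b * d + d * (b * b)"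
      using Jj[of "X * X" Y] Jsq[of X] X Y by simp
    ultimately have "b * (b * d + d * b) + (b * d + d * b) * b = b * b * d + d * (b * b) + J (X * Y * X + X * Y * X)"
      unfolding id Jadd by simp
    hence J3: "J (X * Y * X + X * Y * X) = b * d * b + b * d * b"
      by (simp add: algebra_simps)
    have t1: "\<tau> (X * Y * X) = \<tau> (X * X * Y)" using tt[of "X * Y" X] by (simp add: mult.assoc)
    have t2: "\<tau> (X * Y * X) = \<tau> (Y * (X * X))" using tt[of X "Y * X"] by (simp add: mult.assoc)
    have "\<tau> (X * Y * X + X * Y * X) = \<tau> (X * X * Y + Y * (X * X))"
      using t1 t2 tadd by simp
    hence "\<omega> (C * (b * d * b + b * d * b)) = \<omega> (C * (b * b * d + d * (b * b)))"
      using cor[of "X * Y * X + X * Y * X"] cor[of "X * X * Y + Y * (X * X)"] J3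
        Jj[of "X * X" Y] Jsq[of X] X Y by simp
    hence "\<omega> (C * b * d * b) + \<omega> (C * b * d * b) = \<omega> (C * b * b * d) + \<omega> (C * d * (b * b))"
      by (simp add: distrib_left oadd mult.assoc)
    moreover have "\<omega> (C * b * d * b) = \<omega> (b * C * b * d)" using ot[of "C * b * d" b] by (simp add: mult.assoc)
    moreover have "\<omega> (C * d * (b * b)) = \<omega> (b * b * C * d)" using ot[of "C * d" "b * b"] by (simp add: mult.assoc)
    ultimately show ?thesis by simp
  qed
  have comm_sa: "C * b = b * C" if bsa: "adj b = b" for b
  proof -
    define e where "e = b * C * b + b * C * b - C * b * b - b * b * C"
    have eo: "\<omega> (e * d) = 0" for d
      using stepA[of b d] unfolding e_def by (simp add: algebra_simps oadd lin_diff[OF ol])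
    have esa: "selfadjoint e"
      unfolding e_def selfadjoint_def using bsa Csa by (simp add: adj_add adj_diff adj_mult mult.assoc)
    have e0: "e = 0" using faithful_sq[OF assms(4) esa eo[of e]] .
    define k where "k = b * C - C * b"
    have kb: "k * b = b * k" using e0 unfolding k_def e_def by (simp add: algebra_simps)
    have kk_eq: "(b * C - C * b) * k = b * (C * k) - C * (b * k)" by (simp add: left_diff_distrib mult.assoc)
    hence "k * k = b * (C * k) - C * (b * k)" by (simp only: k_def[symmetric])
    hence "\<omega> (k * k) = \<omega> (b * (C * k)) - \<omega> (C * (b * k))"
      by (simp add: lin_diff[OF ol])
    also have "\<omega> (b * (C * k)) = \<omega> (C * (k * b))" using ot[of b "C * k"] by (simp add: mult.assoc)
    finally have kk: "\<omega> (k * k) = 0" using kb by simp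
    define m where "m = \<i> *\<^sub>C k"
    have msa: "selfadjoint m" unfolding m_def k_def selfadjoint_def using bsa Csa
      by (simp add: adj_scaleC adj_diff adj_mult scaleC_diff_right scaleC_minus_left)
    have "m * m = (\<i> * \<i>) *\<^sub>C (k * k)" unfolding m_def
      by (simp add: mult_scaleC_left mult_scaleC_right scaleC_scaleC)
    hence "\<omega> (m * m) = 0" using kk osc by simp
    hence "m = 0" using faithful_sq[OF assms(4) msa] by blast
    hence "(- \<i>) *\<^sub>C m = 0" by simp
    hence "k = 0" unfolding m_def by (simp add: scaleC_scaleC scaleC_one)
    thus ?thesis unfolding k_def by simp
  qed
  show ?thesis unfolding central_def
  proof
    fix y :: 'b
    define h where "h = (1/2) *\<^sub>C (y + adj y)"
    define k where "k = (- \<i>/2) *\<^sub>C (y - adj y)"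
    have hsa: "adj h = h" unfolding h_def
      by (simp add: adj_scaleC adj_add adj_adj add.commute)
    have ksa: "adj k = k" unfolding k_def
      by (simp add: adj_scaleC adj_diff adj_adj scaleC_diff_right scaleC_minus_left)
    have yhk: "y = h + \<i> *\<^sub>C k"
      unfolding h_def k_def
      by (simp add: scaleC_scaleC scaleC_add_right scaleC_diff_right algebra_simps scaleC_one
          flip: scaleC_add_left scaleC_diff_left)
    have "C * y = C * h + \<i> *\<^sub>C (C * k)" unfolding yhk by (simp add: distrib_left mult_scaleC_right)
    also have "\<dots> = h * C + \<i> *\<^sub>C (k * C)" using comm_sa[OF hsa] comm_sa[OF ksa] by simp
    also have "\<dots> = y * C" unfolding yhk by (simp add: distrib_right mult_scaleC_left)
    finally show "C * y = y * C" .
  qed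
qed

end
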